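(* Let $G=A_\infty$ be the finitary alternating group on a countably infinite set (the group of even permutations moving only finitely many points). Then every element of $G$ is a commutator $xyx^{-1}y^{-1}$ with $x,y\in G$, but for every conjugacy class $C$ of $G$ one has $C^2=\{c_1c_2: c_1,c_2\in C\}\ne G$. *)

theory Defs
  imports "HOL-Combinatorics.Permutations"
begin

definition Alt_inf :: "(nat \<Rightarrow> nat) set" where
  "Alt_inf = {p. permutation p \<and> evenperm p}"

definition conj_class :: "(nat \<Rightarrow> nat) \<Rightarrow> (nat \<Rightarrow> nat) set" where
  "conj_class g = {h \<circ> g \<circ> inv h | h. h \<in> Alt_inf}"

end

theory Submission
  imports Defs "HOL-Combinatorics.Cycles"
begin

definition Comm :: "('a \<Rightarrow> 'a) \<Rightarrow> 'a set \<Rightarrow> bool" where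
  "Comm g S \<longleftrightarrow> (\<exists>x y. x permutes S \<and> y permutes S \<and> g \<circ> y \<circ> x = x \<circ> y)"

lemma comm_fix:
  assumes "x permutes S" "y permutes S" "g \<circ> y \<circ> x = x \<circ> y" "a \<notin> S"
  shows "g a = a"
proof -
  have "g (y (x a)) = x (y a)" using assms(3) by (metis comp_apply)
  then show ?thesis using assms by (simp add: permutes_not_in)
qed

lemma combine_explicit:
  assumes x1: "x1 permutes S1" and y1: "y1 permutes S1" and x2: "x2 permutes S2" and y2: "y2 permutes S2"
    and d: "S1 \<inter> S2 = {}"
    and e1: "g1 \<circ> y1 \<circ> x1 = x1 \<circ> y1" and e2: "g2 \<circ> y2 \<circ> x2 = x2 \<circ> y2"
  shows "(g1 \<circ> g2) \<circ> (y1 \<circ> y2) \<circ> (x1 \<circ> x2) = (x1 \<circ> x2) \<circ> (y1 \<circ> y2)"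
proof
  fix a
  have f1: "\<And>b. b \<notin> S1 \<Longrightarrow> g1 b = b" using comm_fix[OF x1 y1 e1] by blast
  have f2: "\<And>b. b \<notin> S2 \<Longrightarrow> g2 b = b" using comm_fix[OF x2 y2 e2] by blast
  have q1: "g1 (y1 (x1 b)) = x1 (y1 b)" for b using e1 by (metis comp_apply)
  have q2: "g2 (y2 (x2 b)) = x2 (y2 b)" for b using e2 by (metis comp_apply)
  have dd1: "\<And>b. b \<in> S1 \<Longrightarrow> b \<notin> S2" and dd2: "\<And>b. b \<in> S2 \<Longrightarrow> b \<notin> S1" using d by blast+
  consider "a \<in> S1" | "a \<in> S2" | "a \<notin> S1" "a \<notin> S2" by blast
  then show "((g1 \<circ> g2) \<circ> (y1 \<circ> y2) \<circ> (x1 \<circ> x2)) a = ((x1 \<circ> x2) \<circ> (y1 \<circ> y2)) a"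
  proof cases
    case 1
    have n2: "a \<notin> S2" using 1 d by blast
    have i1: "x1 a \<in> S1" "y1 (x1 a) \<in> S1" "y1 a \<in> S1"
      using 1 x1 y1 by (simp_all add: permutes_in_image)
    have "((g1 \<circ> g2) \<circ> (y1 \<circ> y2) \<circ> (x1 \<circ> x2)) a = g1 (g2 (y1 (y2 (x1 a))))"
      using n2 x2 by (simp add: permutes_not_in)
    also have "\<dots> = g1 (g2 (y1 (x1 a)))" using i1 d y2 by (subst permutes_not_in[OF y2]) auto
    also have "\<dots> = g1 (y1 (x1 a))" using i1 d f2 by (subst f2) auto
    also have "\<dots> = x1 (y1 a)" by (rule q1)
    also have "\<dots> = ((x1 \<circ> x2) \<circ> (y1 \<circ> y2)) a" proof -
      have "y1 a \<notin> S2" using i1 d by blast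
      then show ?thesis using n2 permutes_not_in[OF x2, of "y1 a"] permutes_not_in[OF y2, of a] by simp
    qed
    finally show ?thesis .
  next
    case 2
    have n1: "a \<notin> S1" using 2 d by blast
    have i2: "x2 a \<in> S2" "y2 (x2 a) \<in> S2" "y2 a \<in> S2" "x2 (y2 a) \<in> S2"
      using 2 x2 y2 by (simp_all add: permutes_in_image)
    have "((g1 \<circ> g2) \<circ> (y1 \<circ> y2) \<circ> (x1 \<circ> x2)) a = g1 (g2 (y1 (y2 (x1 (x2 a)))))" by simp
    also have "\<dots> = g1 (g2 (y2 (x2 a)))" using i2 dd2 permutes_not_in[OF x1, of "x2 a"] permutes_not_in[OF y1, of "y2 (x2 a)"] by simp
    also have "\<dots> = g1 (x2 (y2 a))" using q2 by simp
    also have "\<dots> = x2 (y2 a)" using i2 dd2 f1 by simp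
    also have "\<dots> = ((x1 \<circ> x2) \<circ> (y1 \<circ> y2)) a" using n1 i2 dd2 permutes_not_in[OF x1, of "x2 (y2 a)"] permutes_not_in[OF y1, of "y2 a"] by simp
    finally show ?thesis .
  next
    case 3
    then show ?thesis using x1 y1 x2 y2 f1 f2 by (simp add: permutes_not_in)
  qed
qed

lemma comm_combine:
  assumes "Comm g1 S1" "Comm g2 S2" "S1 \<inter> S2 = {}"
  shows "Comm (g1 \<circ> g2) (S1 \<union> S2)"
proof -
  obtain x1 y1 where a1: "x1 permutes S1" "y1 permutes S1" "g1 \<circ> y1 \<circ> x1 = x1 \<circ> y1"
    using assms(1) unfolding Comm_def by blast
  obtain x2 y2 where a2: "x2 permutes S2" "y2 permutes S2" "g2 \<circ> y2 \<circ> x2 = x2 \<circ> y2"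
    using assms(2) unfolding Comm_def by blast
  have "x1 \<circ> x2 permutes (S1 \<union> S2)" "y1 \<circ> y2 permutes (S1 \<union> S2)"
    using a1 a2 by (meson permutes_compose permutes_subset sup_ge1 sup_ge2)+
  then show ?thesis unfolding Comm_def
    using combine_explicit[OF a1(1,2) a2(1,2) assms(3) a1(3) a2(3)] by blast
qed

definition lift :: "'a list \<Rightarrow> (nat \<Rightarrow> nat) \<Rightarrow> 'a \<Rightarrow> 'a" where
  "lift zs f a = (if a \<in> set zs then zs ! f (THE i. i < length zs \<and> zs ! i = a) else a)"

lemma the_idx: "distinct zs \<Longrightarrow> i < length zs \<Longrightarrow> (THE j. j < length zs \<and> zs ! j = zs ! i) = i"
  by (rule the_equality) (auto simp: nth_eq_iff_index_eq)

lemma lift_nth: "distinct zs \<Longrightarrow> i < length zs \<Longrightarrow> lift zs f (zs ! i) = zs ! f i"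
  by (simp add: lift_def the_idx)

lemma lift_out: "a \<notin> set zs \<Longrightarrow> lift zs f a = a"
  by (simp add: lift_def)

lemma lift_permutes:
  assumes d: "distinct zs" and b: "\<And>i. i < length zs \<Longrightarrow> f i < length zs"
    and inj: "inj_on f {..<length zs}"
  shows "lift zs f permutes set zs"
proof (rule bij_imp_permutes)
  have fim: "f ` {..<length zs} = {..<length zs}"
    using b inj by (intro endo_inj_surj) auto
  have sz: "set zs = (!) zs ` {..<length zs}" by (auto simp: in_set_conv_nth)
  have "lift zs f ` set zs = (\<lambda>i. zs ! f i) ` {..<length zs}"
    unfolding sz image_image using d by (intro image_cong) (auto simp: lift_nth)
  also have "\<dots> = (!) zs ` (f ` {..<length zs})" by (simp add: image_image)
  also have "\<dots> = set zs" using fim sz by simp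
  finally have im: "lift zs f ` set zs = set zs" .
  then have "inj_on (lift zs f) (set zs)"
    by (intro eq_card_imp_inj_on) auto
  then show "bij_betw (lift zs f) (set zs) (set zs)" using im by (simp add: bij_betw_def)
  show "\<And>x. x \<notin> set zs \<Longrightarrow> lift zs f x = x" by (simp add: lift_out)
qed

lemma lift_comm:
  assumes d: "distinct zs"
    and bX: "\<And>i. i < length zs \<Longrightarrow> X i < length zs" and iX: "inj_on X {..<length zs}"
    and bY: "\<And>i. i < length zs \<Longrightarrow> Y i < length zs" and iY: "inj_on Y {..<length zs}"
    and eq: "\<And>i. i < length zs \<Longrightarrow> G (Y (X i)) = X (Y i)"
    and gi: "\<And>i. i < length zs \<Longrightarrow> g (zs ! i) = zs ! G i"
    and go: "\<And>a. a \<notin> set zs \<Longrightarrow> g a = a"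
  shows "Comm g (set zs)"
  unfolding Comm_def
proof (intro exI conjI)
  show "lift zs X permutes set zs" by (rule lift_permutes[OF d bX iX])
  show "lift zs Y permutes set zs" by (rule lift_permutes[OF d bY iY])
  show "g \<circ> lift zs Y \<circ> lift zs X = lift zs X \<circ> lift zs Y"
  proof
    fix a
    show "(g \<circ> lift zs Y \<circ> lift zs X) a = (lift zs X \<circ> lift zs Y) a"
    proof (cases "a \<in> set zs")
      case True
      then obtain i where i: "i < length zs" "a = zs ! i" by (auto simp: in_set_conv_nth)
      then show ?thesis using d bX bY eq gi by (simp add: lift_nth)
    next
      case False
      then show ?thesis using go by (simp add: lift_out)
    qed
  qed
qed

lemma cyc_nth:
  assumes "distinct cs" "i < length cs"
  shows "cycle_of_list cs (cs ! i) = cs ! ((Suc i) mod length cs)"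
proof -
  have "map (cycle_of_list cs ^^ 1) cs = rotate 1 cs" by (rule cyclic_rotation[OF assms(1)])
  then have "(map (cycle_of_list cs) cs) ! i = rotate 1 cs ! i" by simp
  then show ?thesis using assms(2) by (simp add: nth_rotate1)
qed


definition Go :: "nat \<Rightarrow> nat \<Rightarrow> nat" where "Go n i = (if i = n - 1 then 0 else i + 1)"
definition Xo :: "nat \<Rightarrow> nat \<Rightarrow> nat" where
  "Xo n i = (if i + (n+1) div 2 < n then i + (n+1) div 2 else i + (n+1) div 2 - n)"
definition Yo :: "nat \<Rightarrow> nat \<Rightarrow> nat" where "Yo n i = (if i = 0 then 0 else n - i)"

lemma odd_eq:
  assumes n: "n = 2 * kk - 1" and kk: "kk \<ge> 1" and i: "i < n"
  shows "Go n (Yo n (Xo n i)) = Xo n (Yo n i)"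
proof -
  have kd: "Suc n div 2 = kk" using n kk by auto
  have Xa: "j + kk < n \<Longrightarrow> Xo n j = j + kk" for j by (simp add: Xo_def kd)
  have Xb: "\<not> j + kk < n \<Longrightarrow> Xo n j = j + kk - n" for j by (simp add: Xo_def kd)
  have Y0: "Yo n 0 = 0" by (simp add: Yo_def)
  have Yp: "j > 0 \<Longrightarrow> Yo n j = n - j" for j by (simp add: Yo_def)
  have Ga: "j = n - 1 \<Longrightarrow> Go n j = 0" for j by (simp add: Go_def)
  have Gb: "j \<noteq> n - 1 \<Longrightarrow> Go n j = j + 1" for j by (simp add: Go_def)
  consider "i = 0" "kk < n" | "i = 0" "\<not> kk < n" | "i > 0" "i + kk < n" | "i > 0" "\<not> i + kk < n" "i = kk - 1"
    | "i > 0" "\<not> i + kk < n" "i \<noteq> kk - 1"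
    by linarith
  then show ?thesis
  proof cases
    case 1
    have "Xo n i = kk" using 1 Xa by simp
    moreover have "Yo n kk = kk - 1" using Yp[of kk] kk n by simp
    moreover have "Go n (kk - 1) = kk" using Gb[of "kk - 1"] kk n 1 by simp
    ultimately show ?thesis using 1 Y0 by simp
  next
    case 2
    have "n = 1" using 2 n kk by linarith
    then show ?thesis using 2 by (simp add: Go_def Xo_def Yo_def)
  next
    case 3
    have "Xo n i = i + kk" using 3 Xa by simp
    moreover have "Yo n (i + kk) = kk - 1 - i" using Yp[of "i+kk"] 3 kk n by simp
    moreover have "Go n (kk - 1 - i) = kk - i" using Gb[of "kk - 1 - i"] 3 kk n by simp
    moreover have "Yo n i = n - i" using Yp 3 by simp
    moreover have "Xo n (n - i) = kk - i" using Xb[of "n - i"] 3 kk n by simp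
    ultimately show ?thesis by simp
  next
    case 4
    have "Xo n i = 0" using 4 Xb n kk by simp
    moreover have "Go n 0 = 1" using Gb[of 0] 4 i by simp
    moreover have "Yo n i = kk" using Yp 4 n kk by simp
    moreover have "Xo n kk = 1" using Xb[of kk] 4 n kk by simp
    ultimately show ?thesis using Y0 by simp
  next
    case 5
    have x: "Xo n i = i + 1 - kk" using 5 Xb n kk by simp
    have y: "Yo n (i + 1 - kk) = 3 * kk - 2 - i" using Yp[of "i + 1 - kk"] 5 n kk by simp
    have yi: "Yo n i = n - i" using Yp 5 by simp
    show ?thesis
    proof (cases "i = kk")
      case True
      have e: "3 * kk - 2 - i = n - 1" using True n kk by linarith
      have "Go n (3 * kk - 2 - i) = 0" using Ga[OF e] .
      moreover have "Xo n (n - i) = 0" using Xb[of "n - i"] True n kk by simp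
      ultimately show ?thesis using x y yi by simp
    next
      case False
      have "Go n (3 * kk - 2 - i) = 3 * kk - 1 - i" using Gb[of "3 * kk - 2 - i"] False 5 i n kk by simp
      moreover have "Xo n (n - i) = 3 * kk - 1 - i" using Xa[of "n - i"] False 5 i n kk by simp
      ultimately show ?thesis using x y yi by simp
    qed
  qed
qed

lemma odd_cycle_comm:
  assumes d: "distinct cs" and o: "odd (length cs)"
  shows "Comm (cycle_of_list cs) (set cs)"
proof -
  define n where "n = length cs"
  define kk where "kk = Suc n div 2"
  have kk: "n = 2 * kk - 1" "kk \<ge> 1" using o unfolding kk_def n_def by (auto elim!: oddE)
  have kd: "Suc n div 2 = kk" by (simp add: kk_def)
  show ?thesis
  proof (rule lift_comm[where X = "Xo n" and Y = "Yo n" and G = "Go n"])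
    show "distinct cs" by (rule d)
    show "\<And>i. i < length cs \<Longrightarrow> Xo n i < length cs" using kk unfolding n_def[symmetric] by (simp add: Xo_def kd; linarith)
    show "inj_on (Xo n) {..<length cs}" unfolding n_def[symmetric] inj_on_def
    proof (intro ballI impI)
      fix i j assume ij: "i \<in> {..<n}" "j \<in> {..<n}" "Xo n i = Xo n j"
      show "i = j"
      proof (cases "i + kk < n"; cases "j + kk < n")
      qed (use ij in \<open>simp_all add: Xo_def kd\<close>)
    qed
    show "\<And>i. i < length cs \<Longrightarrow> Yo n i < length cs" unfolding n_def[symmetric] by (simp add: Yo_def)
    show "inj_on (Yo n) {..<length cs}" unfolding n_def[symmetric] inj_on_def by (auto simp: Yo_def split: if_splits)
    show "\<And>i. i < length cs \<Longrightarrow> Go n (Yo n (Xo n i)) = Xo n (Yo n i)" unfolding n_def[symmetric] using odd_eq kk by blast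
    show "\<And>i. i < length cs \<Longrightarrow> cycle_of_list cs (cs ! i) = cs ! Go n i"
    proof -
      fix i assume i: "i < length cs"
      have "Suc i mod length cs = Go n i" using i unfolding n_def[symmetric] by (auto simp: Go_def)
      then show "cycle_of_list cs (cs ! i) = cs ! Go n i" using cyc_nth[OF d i] by simp
    qed
    show "\<And>a. a \<notin> set cs \<Longrightarrow> cycle_of_list cs a = a" by (rule id_outside_supp)
  qed
qed


definition Gp :: "nat \<Rightarrow> nat \<Rightarrow> nat \<Rightarrow> nat" where
  "Gp m n i = (if i < m then (if i = m - 1 then 0 else i + 1) else (if i = m + n - 1 then m else i + 1))"
definition Yp :: "nat \<Rightarrow> nat \<Rightarrow> nat \<Rightarrow> nat" where
  "Yp m n i = (if i < m then (if i = 0 then 0 else m - i) else 2*m + n - 1 - i)"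
definition Xp :: "nat \<Rightarrow> nat \<Rightarrow> nat \<Rightarrow> nat" where
  "Xp m n i = (if i = 0 then m else if i < m div 2 then i else if i = m div 2 then m + n div 2
     else if i < m - 1 then i + 1 else if i = m - 1 then 0 else if i = m then m div 2
     else if i < m + n div 2 then i else if i < m + n - 1 then i + 1
     else if m = 2 then 0 else m div 2 + 1)"


definition Xq :: "nat \<Rightarrow> nat \<Rightarrow> nat \<Rightarrow> nat" where
  "Xq m n j = (if j = 0 then (if m = 2 then m + n - 1 else m - 1) else if j < m div 2 then j
     else if j = m div 2 then m else if j = m div 2 + 1 \<and> m > 2 then m + n - 1
     else if j < m then j - 1 else if j = m then 0 else if j < m + n div 2 then j
     else if j = m + n div 2 then m div 2 else j - 1)"


context
  fixes m n h k :: nat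
  assumes mh: "m = 2*h" and nk: "n = 2*k" and h1: "h \<ge> 1" and k1: "k \<ge> 1"
begin

lemma md: "m div 2 = h" "n div 2 = k" using mh nk by auto

lemma X1: "Xp m n 0 = m" by (simp add: Xp_def; arith?)
lemma X2: "0 < j \<Longrightarrow> j < h \<Longrightarrow> Xp m n j = j" by (simp add: Xp_def md; arith?)
lemma X3: "Xp m n h = m + k" using h1 by (simp add: Xp_def md; arith?)
lemma X4: "h < j \<Longrightarrow> j < m - 1 \<Longrightarrow> Xp m n j = j + 1" by (simp add: Xp_def md; arith?)
lemma X5: "j = m - 1 \<Longrightarrow> j \<noteq> h \<Longrightarrow> Xp m n j = 0" using mh h1 by (simp add: Xp_def md; arith?)
lemma X6: "Xp m n m = h" using mh h1 by (simp add: Xp_def md; arith?)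
lemma X7: "m < j \<Longrightarrow> j < m + k \<Longrightarrow> Xp m n j = j" using mh h1 by (simp add: Xp_def md; arith?)
lemma X8: "m + k \<le> j \<Longrightarrow> j < m + n - 1 \<Longrightarrow> Xp m n j = j + 1" using mh nk h1 k1 by (simp add: Xp_def md; arith?)
lemma X9: "j = m + n - 1 \<Longrightarrow> Xp m n j = (if m = 2 then 0 else h + 1)" using mh nk h1 k1 by (simp add: Xp_def md; arith?)

lemma Y1: "Yp m n 0 = 0" using mh h1 by (simp add: Yp_def; arith?)
lemma Y2: "0 < j \<Longrightarrow> j < m \<Longrightarrow> Yp m n j = m - j" by (simp add: Yp_def; arith?)
lemma Y3: "m \<le> j \<Longrightarrow> Yp m n j = 2*m + n - 1 - j" by (simp add: Yp_def; arith?)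

lemma G1: "j < m \<Longrightarrow> j \<noteq> m - 1 \<Longrightarrow> Gp m n j = j + 1" by (simp add: Gp_def; arith?)
lemma G2: "j = m - 1 \<Longrightarrow> Gp m n j = 0" using mh h1 by (simp add: Gp_def; arith?)
lemma G3: "m \<le> j \<Longrightarrow> j \<noteq> m + n - 1 \<Longrightarrow> Gp m n j = j + 1" by (simp add: Gp_def; arith?)
lemma G4: "j = m + n - 1 \<Longrightarrow> Gp m n j = m" using nk k1 by (simp add: Gp_def; arith?)


lemma pair_eq:
  assumes i: "i < m + n"
  shows "Gp m n (Yp m n (Xp m n i)) = Xp m n (Yp m n i)"
proof -
  note F = mh nk h1 k1 i
  consider "i = 0" | "0 < i" "i < h" | "i = h" | "h < i" "i < m - 1" | "i = m - 1" "i \<noteq> h"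
    | "i = m" | "m < i" "i < m + k" | "m + k \<le> i" "i < m + n - 1" | "i = m + n - 1" "i \<noteq> m"
    using F by linarith
  then show ?thesis
  proof cases
    case 1
    have a: "Xp m n i = m" using 1 X1 by simp
    have b: "Yp m n m = m + n - 1" using Y3[of m] F by simp
    have c: "Gp m n (m + n - 1) = m" by (rule G4) simp
    have d: "Yp m n i = 0" using 1 Y1 by simp
    show ?thesis using a b c d 1 X1 by simp
  next
    case 2
    have a: "Xp m n i = i" by (rule X2) (use 2 in linarith)+
    have b: "Yp m n i = m - i" by (rule Y2) (use 2 F in linarith)+
    show ?thesis
    proof (cases "i = 1")
      case True
      have c: "Gp m n (m - i) = 0" by (rule G2) (use True in simp)
      have e: "Xp m n (m - i) = 0" by (rule X5) (use True 2 F in linarith)+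
      show ?thesis using a b c e by simp
    next
      case False
      have c: "Gp m n (m - i) = m - i + 1" by (rule G1) (use False 2 F in linarith)+
      have e: "Xp m n (m - i) = m - i + 1" by (rule X4) (use False 2 F in linarith)+
      show ?thesis using a b c e by simp
    qed
  next
    case 3
    have a: "Xp m n i = m + k" using 3 X3 by simp
    have b: "Yp m n (m + k) = m + k - 1" using Y3[of "m + k"] F by simp
    have c: "Gp m n (m + k - 1) = m + k" using G3[of "m + k - 1"] F by simp
    have d: "Yp m n i = h" using Y2[of i] 3 F by simp
    show ?thesis using a b c d 3 X3 by simp
  next
    case 4
    have a: "Xp m n i = i + 1" by (rule X4) (use 4 in linarith)+
    have b: "Yp m n (i + 1) = m - i - 1" using Y2[of "i+1"] 4 F by simp
    have c: "Gp m n (m - i - 1) = m - i" using G1[of "m - i - 1"] 4 F by simp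
    have d: "Yp m n i = m - i" using Y2[of i] 4 F by simp
    have e: "Xp m n (m - i) = m - i" by (rule X2) (use 4 F in linarith)+
    show ?thesis using a b c d e by simp
  next
    case 5
    have a: "Xp m n i = 0" using X5 5 by simp
    have c: "Gp m n 0 = 1" using G1[of 0] 5 F by simp
    have d: "Yp m n i = 1" using Y2[of i] 5 F by simp
    have e: "Xp m n 1 = 1" by (rule X2) (use 5 F in linarith)+
    show ?thesis using a c d e Y1 by simp
  next
    case 6
    have a: "Xp m n i = h" using X6 6 by simp
    have b: "Yp m n h = h" using Y2[of h] F by simp
    have d: "Yp m n i = m + n - 1" using Y3[of i] 6 F by simp
    have e: "Xp m n (m + n - 1) = (if m = 2 then 0 else h + 1)" by (rule X9) simp
    show ?thesis
    proof (cases "m = 2")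
      case True
      have c: "Gp m n h = 0" by (rule G2) (use True F in linarith)
      show ?thesis using a b c d e True by simp
    next
      case False
      have c: "Gp m n h = h + 1" by (rule G1) (use False F in linarith)+
      show ?thesis using a b c d e False by simp
    qed
  next
    case 7
    have a: "Xp m n i = i" by (rule X7) (use 7 in linarith)+
    have b: "Yp m n i = 2*m + n - 1 - i" using Y3[of i] 7 by simp
    have c: "Gp m n (2*m + n - 1 - i) = 2*m + n - 1 - i + 1" by (rule G3) (use 7 F in linarith)+
    have e: "Xp m n (2*m + n - 1 - i) = 2*m + n - 1 - i + 1" by (rule X8) (use 7 F in linarith)+
    show ?thesis using a b c e by simp
  next
    case 8
    have a: "Xp m n i = i + 1" by (rule X8) (use 8 in linarith)+
    have b: "Yp m n (i + 1) = 2*m + n - 1 - (i + 1)" using Y3[of "i+1"] 8 F by simp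
    have c: "Gp m n (2*m + n - 1 - (i + 1)) = 2*m + n - 1 - (i + 1) + 1" by (rule G3) (use 8 F in linarith)+
    have d: "Yp m n i = 2*m + n - 1 - i" using Y3[of i] 8 F by simp
    have e: "Xp m n (2*m + n - 1 - i) = 2*m + n - 1 - i" by (rule X7) (use 8 F in linarith)+
    have f: "2*m + n - 1 - (i + 1) + 1 = 2*m + n - 1 - i" using 8 F by linarith
    show ?thesis using a b c d e f by simp
  next
    case 9
    have d: "Yp m n i = m" using Y3[of i] 9 F by simp
    show ?thesis
    proof (cases "m = 2")
      case True
      have a: "Xp m n i = 0" using X9 9 True by simp
      have c: "Gp m n 0 = 1" using G1[of 0] True by simp
      have e: "Xp m n m = 1" using X6 True F by simp
      show ?thesis using a c d e Y1 True by simp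
    next
      case False
      have a: "Xp m n i = h + 1" using X9 9 False by simp
      have b: "Yp m n (h + 1) = h - 1" using Y2[of "h+1"] False F by simp
      have c: "Gp m n (h - 1) = h" using G1[of "h - 1"] False F by simp
      show ?thesis using a b c d X6 by simp
    qed
  qed
qed

lemma Q1: "Xq m n m = 0" using mh h1 by (simp add: Xq_def md; arith?)
lemma Q2: "0 < j \<Longrightarrow> j < h \<Longrightarrow> Xq m n j = j" by (simp add: Xq_def md)
lemma Q3: "Xq m n (m + k) = h" using mh h1 k1 by (simp add: Xq_def md; arith?)
lemma Q4: "h + 1 < j \<Longrightarrow> j < m \<Longrightarrow> Xq m n j = j - 1" using mh h1 by (simp add: Xq_def md; arith?)
lemma Q5: "Xq m n 0 = (if m = 2 then m + n - 1 else m - 1)" by (simp add: Xq_def md)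
lemma Q6: "Xq m n h = m" using h1 by (simp add: Xq_def md)
lemma Q7: "m < j \<Longrightarrow> j < m + k \<Longrightarrow> Xq m n j = j" using mh h1 by (simp add: Xq_def md; arith?)
lemma Q8: "m + k < j \<Longrightarrow> Xq m n j = j - 1" using mh h1 by (simp add: Xq_def md; arith?)
lemma Q9: "m > 2 \<Longrightarrow> Xq m n (h + 1) = m + n - 1" using mh h1 by (simp add: Xq_def md; arith?)

lemma pair_Xinv_bd:
  assumes i: "i < m + n"
  shows "Xq m n (Xp m n i) = i \<and> Xp m n i < m + n"
proof -
  note F = mh nk h1 k1 i
  consider "i = 0" | "0 < i" "i < h" | "i = h" | "h < i" "i < m - 1" | "i = m - 1" "i \<noteq> h"
    | "i = m" | "m < i" "i < m + k" | "m + k \<le> i" "i < m + n - 1" | "i = m + n - 1" "i \<noteq> m"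
    using F by linarith
  then show ?thesis
  proof cases
    case 1 then show ?thesis using X1 Q1 F by simp
  next
    case 2
    have a: "Xp m n i = i" by (rule X2) (use 2 in linarith)+
    have b: "Xq m n i = i" by (rule Q2) (use 2 in linarith)+
    show ?thesis using a b F by simp
  next
    case 3 then show ?thesis using X3 Q3 F by simp
  next
    case 4
    have a: "Xp m n i = i + 1" by (rule X4) (use 4 in linarith)+
    have b: "Xq m n (i + 1) = i + 1 - 1" by (rule Q4) (use 4 F in linarith)+
    show ?thesis using a b 4 F by simp
  next
    case 5
    have a: "Xp m n i = 0" using X5 5 by simp
    have "m \<noteq> 2" using 5 F by linarith
    then show ?thesis using a Q5 5 F by simp
  next
    case 6 then show ?thesis using X6 Q6 F by simp
  next
    case 7
    have a: "Xp m n i = i" by (rule X7) (use 7 in linarith)+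
    have b: "Xq m n i = i" by (rule Q7) (use 7 in linarith)+
    show ?thesis using a b F by simp
  next
    case 8
    have a: "Xp m n i = i + 1" by (rule X8) (use 8 in linarith)+
    have b: "Xq m n (i + 1) = i + 1 - 1" by (rule Q8) (use 8 F in linarith)+
    show ?thesis using a b 8 F by simp
  next
    case 9
    show ?thesis
    proof (cases "m = 2")
      case True
      have a: "Xp m n i = 0" using X9 9 True by simp
      show ?thesis using a Q5 True 9 F by simp
    next
      case False
      have a: "Xp m n i = h + 1" using X9 9 False by simp
      have "m > 2" using False F by linarith
      then show ?thesis using a Q9 9 F by simp
    qed
  qed
qed

lemma Yp_inv_bd:
  assumes i: "i < m + n"
  shows "Yp m n (Yp m n i) = i \<and> Yp m n i < m + n"
proof -
  note F = mh nk h1 k1 i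
  consider "i = 0" | "0 < i" "i < m" | "m \<le> i" using F by linarith
  then show ?thesis
  proof cases
    case 1 then show ?thesis using Y1 F by simp
  next
    case 2
    have a: "Yp m n i = m - i" by (rule Y2) (use 2 in linarith)+
    have b: "Yp m n (m - i) = m - (m - i)" by (rule Y2) (use 2 in linarith)+
    show ?thesis using a b 2 F by simp
  next
    case 3
    have a: "Yp m n i = 2*m + n - 1 - i" by (rule Y3) (use 3 in linarith)+
    have b: "Yp m n (2*m + n - 1 - i) = 2*m + n - 1 - (2*m + n - 1 - i)" by (rule Y3) (use 3 F in linarith)+
    show ?thesis using a b 3 F by simp
  qed
qed
end


lemma pair_comm:
  assumes dc: "distinct cs" and dd: "distinct ds" and disj: "set cs \<inter> set ds = {}"
    and ec: "even (length cs)" and ed: "even (length ds)" and nc: "cs \<noteq> []" and nd: "ds \<noteq> []"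
  shows "Comm (cycle_of_list ds \<circ> cycle_of_list cs) (set cs \<union> set ds)"
proof -
  define m where "m = length cs"
  define n where "n = length ds"
  obtain h where mh: "m = 2*h" using ec by (auto simp: m_def elim!: evenE)
  obtain k where nk: "n = 2*k" using ed by (auto simp: n_def elim!: evenE)
  have h1: "h \<ge> 1" using nc mh unfolding m_def by (cases h) auto
  have k1: "k \<ge> 1" using nd nk unfolding n_def by (cases k) auto
  define zs where "zs = cs @ ds"
  have dz: "distinct zs" using dc dd disj by (simp add: zs_def)
  have lz: "length zs = m + n" by (simp add: zs_def m_def n_def)
  have sz: "set zs = set cs \<union> set ds" by (simp add: zs_def)
  have "Comm (cycle_of_list ds \<circ> cycle_of_list cs) (set zs)"
  proof (rule lift_comm[where X = "Xp m n" and Y = "Yp m n" and G = "Gp m n"])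
    show "distinct zs" by (rule dz)
    show "\<And>i. i < length zs \<Longrightarrow> Xp m n i < length zs"
      using pair_Xinv_bd[OF mh nk h1 k1] lz by simp
    show "inj_on (Xp m n) {..<length zs}"
      by (rule inj_on_inverseI[where g = "Xq m n"]) (use pair_Xinv_bd[OF mh nk h1 k1] lz in auto)
    show "\<And>i. i < length zs \<Longrightarrow> Yp m n i < length zs"
      using Yp_inv_bd[OF mh nk h1 k1] lz by simp
    show "inj_on (Yp m n) {..<length zs}"
      by (rule inj_on_inverseI[where g = "Yp m n"]) (use Yp_inv_bd[OF mh nk h1 k1] lz in auto)
    show "\<And>i. i < length zs \<Longrightarrow> Gp m n (Yp m n (Xp m n i)) = Xp m n (Yp m n i)"
      using pair_eq[OF mh nk h1 k1] lz by simp
    show "\<And>a. a \<notin> set zs \<Longrightarrow> (cycle_of_list ds \<circ> cycle_of_list cs) a = a"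
      using sz by (simp add: id_outside_supp)
    show "(cycle_of_list ds \<circ> cycle_of_list cs) (zs ! i) = zs ! Gp m n i" if i: "i < length zs" for i
    proof (cases "i < m")
      case True
      have z: "zs ! i = cs ! i" using True by (simp add: zs_def m_def nth_append)
      have g: "Gp m n i = Suc i mod m"
        using True mh h1 by (auto simp: Gp_def)
      have gl: "Gp m n i < m" using g mh h1 by simp
      have z2: "zs ! Gp m n i = cs ! Gp m n i" using gl by (simp add: zs_def m_def nth_append)
      have c: "cycle_of_list cs (cs ! i) = cs ! (Suc i mod m)"
        using cyc_nth[OF dc, of i] True by (simp add: m_def)
      have "cs ! (Suc i mod m) \<in> set cs" using gl g by (simp add: m_def)
      then have "cs ! (Suc i mod m) \<notin> set ds" using disj by blast
      then show ?thesis using z z2 c g by (simp add: id_outside_supp)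
    next
      case False
      define j where "j = i - m"
      have j: "j < n" "i = m + j" using False i lz by (auto simp: j_def)
      have z: "zs ! i = ds ! j" using j by (simp add: zs_def m_def nth_append)
      have "ds ! j \<in> set ds" using j by (simp add: n_def)
      then have "ds ! j \<notin> set cs" using disj by blast
      then have c1: "cycle_of_list cs (ds ! j) = ds ! j" by (simp add: id_outside_supp)
      have c2: "cycle_of_list ds (ds ! j) = ds ! (Suc j mod n)"
        using cyc_nth[OF dd, of j] j by (simp add: n_def)
      have g: "Gp m n i = m + Suc j mod n"
      proof (cases "Suc j = n")
        case True
        then have "i = m + n - 1" using j by simp
        then show ?thesis using True nk k1 by (simp add: Gp_def)
      next
        case False
        then have "Suc j < n" using j by simp
        then have "i \<noteq> m + n - 1" using j by linarith
        then show ?thesis using j \<open>Suc j < n\<close> by (simp add: Gp_def)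
      qed
      have "Suc j mod n < n" using j by simp
      then have z2: "zs ! Gp m n i = ds ! (Suc j mod n)" using g by (simp add: zs_def m_def nth_append)
      show ?thesis using z c1 c2 z2 by simp
    qed
  qed
  then show ?thesis using sz by simp
qed


lemma evenperm_cycle: "distinct cs \<Longrightarrow> evenperm (cycle_of_list cs) = (cs = [] \<or> odd (length cs))"
proof (induction cs rule: cycle_of_list.induct)
  case (1 i j cs)
  have eq: "cycle_of_list (i # j # cs) = transpose i j \<circ> cycle_of_list (j # cs)" by simp
  have "evenperm (cycle_of_list (i # j # cs)) = (evenperm (transpose i j) = evenperm (cycle_of_list (j # cs)))"
    unfolding eq by (rule evenperm_comp[OF permutation_swap_id permutation_of_cycle])
  also have "\<dots> = (False = odd (length (j # cs)))" using 1 by (simp add: evenperm_swap)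
  finally show ?case by (simp del: cycle_of_list.simps)
qed simp_all

lemma comm_id: "Comm id {}"
  unfolding Comm_def by (intro exI[of _ id]) simp

lemma decomp_comm:
  assumes "cycle_decomp I p"
  shows "finite I \<and> p permutes I \<and> (evenperm p \<longrightarrow> Comm p I) \<and>
    (\<not> evenperm p \<longrightarrow> (\<forall>ds. distinct ds \<and> even (length ds) \<and> ds \<noteq> [] \<and> set ds \<inter> I = {}
        \<longrightarrow> Comm (cycle_of_list ds \<circ> p) (set ds \<union> I)))"
  using assms
proof (induction rule: cycle_decomp.induct)
  case empty
  have "finite {}" "id permutes {}" "evenperm id" by auto
  then show ?case using comm_id by blast
next
  case (comp I p cs)
  define c where "c = cycle_of_list cs"
  have fI: "finite I" and pI: "p permutes I" using comp.IH by auto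
  have E: "evenperm p \<Longrightarrow> Comm p I" using comp.IH by blast
  have O: "\<not> evenperm p \<Longrightarrow> distinct ds \<Longrightarrow> even (length ds) \<Longrightarrow> ds \<noteq> [] \<Longrightarrow> set ds \<inter> I = {}
        \<Longrightarrow> Comm (cycle_of_list ds \<circ> p) (set ds \<union> I)" for ds using comp.IH by blast
  have cperm: "c permutes set cs" by (simp add: c_def cycle_permutes)
  have fin: "finite (set cs \<union> I)" using fI by simp
  have perm: "c \<circ> p permutes (set cs \<union> I)"
    using cperm pI by (meson permutes_compose permutes_subset sup_ge1 sup_ge2)
  have pp: "permutation p" using pI fI permutes_imp_permutation by blast
  have pc: "permutation c" by (simp add: c_def permutation_of_cycle)
  have ev: "evenperm (c \<circ> p) = (evenperm c = evenperm p)" by (rule evenperm_comp[OF pc pp])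
  have evc: "evenperm c = (cs = [] \<or> odd (length cs))" using evenperm_cycle[OF comp.hyps(2)] by (simp add: c_def)
  have main: "(evenperm (c \<circ> p) \<longrightarrow> Comm (c \<circ> p) (set cs \<union> I)) \<and>
    (\<not> evenperm (c \<circ> p) \<longrightarrow> (\<forall>ds. distinct ds \<and> even (length ds) \<and> ds \<noteq> [] \<and> set ds \<inter> (set cs \<union> I) = {}
        \<longrightarrow> Comm (cycle_of_list ds \<circ> (c \<circ> p)) (set ds \<union> (set cs \<union> I))))"
  proof (cases "cs = []")
    case True
    then have cp: "c \<circ> p = p" by (simp add: c_def)
    have st: "set cs = {}" using True by simp
    show ?thesis unfolding cp st Un_empty_left using comp.IH by blast
  next
    case ne: False
    show ?thesis
    proof (cases "odd (length cs)")
      case True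
      have Cc: "Comm c (set cs)" unfolding c_def by (rule odd_cycle_comm[OF comp.hyps(2) True])
      have ec: "evenperm c" using evc True by simp
      show ?thesis
      proof (cases "evenperm p")
        case True
        then show ?thesis using ec ev comm_combine[OF Cc E[OF True] comp.hyps(3)] by simp
      next
        case False
        show ?thesis
        proof (intro conjI impI allI)
          show "evenperm (c \<circ> p) \<Longrightarrow> Comm (c \<circ> p) (set cs \<union> I)" using ec ev False by simp
          fix ds assume ds: "distinct ds \<and> even (length ds) \<and> ds \<noteq> [] \<and> set ds \<inter> (set cs \<union> I) = {}"
          have C1: "Comm (cycle_of_list ds \<circ> p) (set ds \<union> I)" using O[OF False] ds by blast
          have dj: "set cs \<inter> (set ds \<union> I) = {}" using ds comp.hyps(3) by blast
          have "Comm (c \<circ> (cycle_of_list ds \<circ> p)) (set cs \<union> (set ds \<union> I))"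
            by (rule comm_combine[OF Cc C1 dj])
          moreover have "c \<circ> (cycle_of_list ds \<circ> p) = cycle_of_list ds \<circ> (c \<circ> p)"
            using cycles_commute[OF comp.hyps(2), of ds] ds unfolding c_def
            by (metis (no_types, lifting) Int_Un_distrib Un_empty comp_assoc inf_commute)
          moreover have "set cs \<union> (set ds \<union> I) = set ds \<union> (set cs \<union> I)" by blast
          ultimately show "Comm (cycle_of_list ds \<circ> (c \<circ> p)) (set ds \<union> (set cs \<union> I))" by simp
        qed
      qed
    next
      case False
      then have evl: "even (length cs)" by simp
      have nec: "\<not> evenperm c" using evc False ne by simp
      show ?thesis
      proof (cases "evenperm p")
        case True
        show ?thesis
        proof (intro conjI impI allI)
          show "evenperm (c \<circ> p) \<Longrightarrow> Comm (c \<circ> p) (set cs \<union> I)" using nec ev True by simp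
          fix ds assume ds: "distinct ds \<and> even (length ds) \<and> ds \<noteq> [] \<and> set ds \<inter> (set cs \<union> I) = {}"
          have C1: "Comm (cycle_of_list ds \<circ> c) (set cs \<union> set ds)"
            unfolding c_def by (rule pair_comm) (use ds comp.hyps evl ne in auto)
          have dj: "(set cs \<union> set ds) \<inter> I = {}" using ds comp.hyps(3) by blast
          have "Comm ((cycle_of_list ds \<circ> c) \<circ> p) ((set cs \<union> set ds) \<union> I)"
            by (rule comm_combine[OF C1 E[OF True] dj])
          moreover have "(set cs \<union> set ds) \<union> I = set ds \<union> (set cs \<union> I)" by blast
          ultimately show "Comm (cycle_of_list ds \<circ> (c \<circ> p)) (set ds \<union> (set cs \<union> I))"
            by (simp add: comp_assoc)
        qed
      next
        case False
        have "Comm (c \<circ> p) (set cs \<union> I)"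
          unfolding c_def by (rule O[OF False]) (use comp.hyps evl ne in auto)
        then show ?thesis using nec ev False by simp
      qed
    qed
  qed
  show ?case using fin perm main unfolding c_def by blast
qed


lemma part1:
  assumes g: "g \<in> Alt_inf"
  shows "\<exists>x\<in>Alt_inf. \<exists>y\<in>Alt_inf. g = x \<circ> y \<circ> inv x \<circ> inv y"
proof -
  have pg: "permutation g" and eg: "evenperm g" using g by (auto simp: Alt_inf_def)
  obtain S where fS: "finite S" and gS: "g permutes S" using permutation_permutesE[OF pg] by blast
  have "cycle_decomp S g" by (rule cycle_decomposition[OF gS fS])
  then have "Comm g S" using decomp_comm eg by blast
  then obtain x y where xS: "x permutes S" and yS: "y permutes S" and e: "g \<circ> y \<circ> x = x \<circ> y"
    unfolding Comm_def by blast
  define M where "M = Suc (Max (insert 0 S))"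
  have Mb: "a \<in> S \<Longrightarrow> a < M" for a using fS by (simp add: M_def le_imp_less_Suc)
  define T where "T = {M, M+1, M+2, M+3}"
  have dj: "S \<inter> T = {}" using Mb unfolding T_def by fastforce
  define xs where "xs = (if evenperm x then id else transpose M (M+1))"
  define ys where "ys = (if evenperm y then id else transpose (M+2) (M+3))"
  have xsT: "xs permutes T" unfolding xs_def T_def by (auto intro: permutes_swap_id)
  have ysT: "ys permutes T" unfolding ys_def T_def by (auto intro: permutes_swap_id)
  have tc: "transpose (M+2) (M+3) \<circ> transpose M (M+1) = transpose M (M+1) \<circ> transpose (M+2) (M+3)"
    by (auto simp: fun_eq_iff transpose_def)
  have cxy: "id \<circ> ys \<circ> xs = xs \<circ> ys" unfolding xs_def ys_def using tc by auto
  have E: "(g \<circ> id) \<circ> (y \<circ> ys) \<circ> (x \<circ> xs) = (x \<circ> xs) \<circ> (y \<circ> ys)"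
    by (rule combine_explicit[OF xS yS xsT ysT dj e cxy])
  define X where "X = x \<circ> xs"
  define Y where "Y = y \<circ> ys"
  have fT: "finite T" by (simp add: T_def)
  have px: "permutation x" "permutation y" using xS yS fS permutes_imp_permutation by blast+
  have pxs: "permutation xs" "permutation ys" using xsT ysT fT permutes_imp_permutation by blast+
  have PX: "permutation X" "permutation Y" unfolding X_def Y_def using px pxs permutation_compose by blast+
  have "evenperm X" unfolding X_def using evenperm_comp[OF px(1) pxs(1)]
    by (simp add: xs_def evenperm_swap)
  moreover have "evenperm Y" unfolding Y_def using evenperm_comp[OF px(2) pxs(2)]
    by (simp add: ys_def evenperm_swap)
  ultimately have XY: "X \<in> Alt_inf" "Y \<in> Alt_inf" using PX by (auto simp: Alt_inf_def)
  have E': "g \<circ> Y \<circ> X = X \<circ> Y" using E by (simp add: X_def Y_def)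
  have bX: "bij X" and bY: "bij Y" using PX permutation_bijective by blast+
  have "g = X \<circ> Y \<circ> inv X \<circ> inv Y"
  proof
    fix a
    define b where "b = inv X (inv Y a)"
    have "X b = inv Y a" unfolding b_def using bX by (simp add: bij_is_surj surj_f_inv_f)
    then have "Y (X b) = a" using bY by (simp add: bij_is_surj surj_f_inv_f)
    then have "g a = g (Y (X b))" by simp
    also have "\<dots> = X (Y b)" using E' by (metis comp_apply)
    finally show "g a = (X \<circ> Y \<circ> inv X \<circ> inv Y) a" by (simp add: b_def)
  qed
  then show ?thesis using XY by blast
qed

definition qn :: "nat \<Rightarrow> nat \<Rightarrow> nat" where
  "qn n i = (if i < 2*n then (if even i then i + 1 else i - 1) else i)"

lemma qn_suc: "qn (Suc n) = transpose (2*n) (2*n+1) \<circ> qn n"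
proof
  fix i
  show "qn (Suc n) i = (transpose (2*n) (2*n+1) \<circ> qn n) i"
  proof (cases "i < 2*n")
    case True
    have "qn n i < 2*n" using True unfolding qn_def by presburger
    then show ?thesis using True by (simp add: qn_def transpose_def)
  next
    case False
    then show ?thesis by (auto simp: qn_def transpose_def)
  qed
qed

lemma qn_props: "permutation (qn n) \<and> evenperm (qn n) = even n"
proof (induction n)
  case 0
  have "qn 0 = id" by (auto simp: qn_def fun_eq_iff)
  then show ?case by simp
next
  case (Suc n)
  have p: "permutation (transpose (2*n) (2*n+1) \<circ> qn n)"
    using Suc by (intro permutation_compose permutation_swap_id) simp
  have "evenperm (transpose (2*n) (2*n+1) \<circ> qn n) = (False = even n)"
    using evenperm_comp[OF permutation_swap_id, of "qn n" "2*n" "2*n+1"] Suc by (simp add: evenperm_swap)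
  then have e2: "evenperm (transpose (2*n) (2*n+1) \<circ> qn n) = even (Suc n)" by simp
  show ?case unfolding qn_suc using p e2 by blast
qed

lemma qn_supp: "{i. qn n i \<noteq> i} = {..<2*n}"
  by (auto simp: qn_def dest: odd_pos)

lemma conj_supp:
  assumes "bij h"
  shows "{a. (h \<circ> g \<circ> inv h) a \<noteq> a} = h ` {a. g a \<noteq> a}"
proof
  show "{a. (h \<circ> g \<circ> inv h) a \<noteq> a} \<subseteq> h ` {a. g a \<noteq> a}"
  proof
    fix a assume a: "a \<in> {a. (h \<circ> g \<circ> inv h) a \<noteq> a}"
    have ha: "h (inv h a) = a" using assms by (simp add: bij_is_surj surj_f_inv_f)
    then have "g (inv h a) \<noteq> inv h a" using a by auto
    then show "a \<in> h ` {a. g a \<noteq> a}" using ha by (metis (mono_tags, lifting) image_eqI mem_Collect_eq)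
  qed
  show "h ` {a. g a \<noteq> a} \<subseteq> {a. (h \<circ> g \<circ> inv h) a \<noteq> a}"
  proof
    fix a assume "a \<in> h ` {a. g a \<noteq> a}"
    then obtain b where b: "a = h b" "g b \<noteq> b" by blast
    have "inv h (h b) = b" using assms by (simp add: bij_is_inj)
    then show "a \<in> {a. (h \<circ> g \<circ> inv h) a \<noteq> a}" using b assms
      by (simp add: bij_is_inj inj_eq)
  qed
qed

lemma part2:
  assumes g: "g \<in> Alt_inf"
  shows "{c1 \<circ> c2 | c1 c2. c1 \<in> conj_class g \<and> c2 \<in> conj_class g} \<noteq> Alt_inf"
proof
  assume eqs: "{c1 \<circ> c2 | c1 c2. c1 \<in> conj_class g \<and> c2 \<in> conj_class g} = Alt_inf"
  define S where "S = {a. g a \<noteq> a}"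
  have fS: "finite S" using g by (simp add: Alt_inf_def permutation S_def)
  define s where "s = card S"
  define q where "q = qn (2*s+2)"
  have "q \<in> Alt_inf" using qn_props[of "2*s+2"] by (simp add: q_def Alt_inf_def)
  then obtain c1 c2 where q: "q = c1 \<circ> c2" and c1: "c1 \<in> conj_class g" and c2: "c2 \<in> conj_class g"
    using eqs by blast
  have bnd: "finite {a. c a \<noteq> a} \<and> card {a. c a \<noteq> a} \<le> s" if c: "c \<in> conj_class g" for c
  proof -
    obtain h where h: "c = h \<circ> g \<circ> inv h" "h \<in> Alt_inf" using c by (auto simp: conj_class_def)
    have "bij h" using h(2) by (simp add: Alt_inf_def permutation_bijective)
    then have "{a. c a \<noteq> a} = h ` S" using conj_supp h(1) by (simp add: S_def)
    then show ?thesis using fS by (simp add: s_def card_image_le)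
  qed
  have sub: "{a. q a \<noteq> a} \<subseteq> {a. c1 a \<noteq> a} \<union> {a. c2 a \<noteq> a}" using q by auto
  have "card {a. q a \<noteq> a} \<le> card ({a. c1 a \<noteq> a} \<union> {a. c2 a \<noteq> a})"
    using bnd[OF c1] bnd[OF c2] sub by (intro card_mono) auto
  also have "\<dots> \<le> card {a. c1 a \<noteq> a} + card {a. c2 a \<noteq> a}" by (rule card_Un_le)
  also have "\<dots> \<le> 2 * s" using bnd[OF c1] bnd[OF c2] by simp
  finally have "card {a. q a \<noteq> a} \<le> 2 * s" .
  moreover have "card {a. q a \<noteq> a} = 2 * (2*s+2)" unfolding q_def qn_supp by simp
  ultimately show False by simp
qed

theorem mainTheorem4:
  shows "(\<forall>g\<in>Alt_inf. \<exists>x\<in>Alt_inf. \<exists>y\<in>Alt_inf. g = x \<circ> y \<circ> inv x \<circ> inv y)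
    \<and> (\<forall>g\<in>Alt_inf. {c1 \<circ> c2 | c1 c2. c1 \<in> conj_class g \<and> c2 \<in> conj_class g} \<noteq> Alt_inf)"
  using part1 part2 by blast

end
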